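(* Let $n \geq 2$ and let $\{X(h)\}_{h}$ be independent random variables indexed by the edges $h$ of the complete graph $K_n$ on vertex set $\{1,2,\ldots,n\}$, with $\mathbb{P}(X(h)=1) = p(h) = 1-\mathbb{P}(X(h)=0)$; for an edge $h$ with endvertices $u,v$ write $p(u,v)=p(v,u)=p(h)$. Let $G$ be the random graph on $\{1,\ldots,n\}$ whose edges are those $h$ with $X(h)=1$. Define \[\alpha_{low}(n) := \min_{u} \frac{1}{n-1}\sum_{v \neq u} p(u,v),\qquad \alpha_{up}(n) := \max_{u} \frac{1}{n-1}\sum_{v \neq u} p(u,v),\qquad \alpha_e(n) := \binom{n}{2}^{-1}\sum_{1 \leq u<v\leq n} p(u,v).\] Suppose that \[\frac{1}{n^{\beta}} \leq \alpha_{low}(n) \leq \alpha_{up}(n) \leq \max\left(\frac{1}{2},\, 1-\sqrt{\frac{\alpha_e(n)}{2}}\right) - \frac{1}{n^{\gamma}}\] for some constants $0<\beta<\frac{1}{2}$ and $0<\gamma<\frac{1}{2}-\beta$. Then \[\mathbb{P}\left(N_{ext}(G) \leq 3t(G)\right) \geq 1 - e^{-D(\log n)^2} - \mathbb{P}(E_{disc})\] for some constant $D>0$, where $E_{disc}$ is the event that $G$ is disconnected.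
   Context: A graph is Eulerian if it has a closed walk (circuit) using every edge exactly once. A graph $G$ is Eulerian extendable if it can be made Eulerian by adding edges of its complement $\overline{G}$ (pairs of distinct vertices not adjacent in $G$); the result is an Eulerian extension of $G$. $N_{ext}(G)$ denotes the minimum number of edges that must be added to $G$ to obtain an Eulerian extension of $G$. $t(G)$ denotes half the number of odd-degree vertices of $G$. The inequality in the conclusion is understood asymptotically, i.e. for all sufficiently large $n$. *)

theory Defs
  imports Complex_Main "HOL-Library.Extended_Nat"
begin

definition all_pairs :: "nat set \<Rightarrow> nat set set" where
  "all_pairs V = {e. \<exists>u v. u \<in> V \<and> v \<in> V \<and> u \<noteq> v \<and> e = {u, v}}"

definition Kn_edges :: "nat \<Rightarrow> nat set set" where
  "Kn_edges n = all_pairs {1..n}"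

definition degree :: "nat set set \<Rightarrow> nat \<Rightarrow> nat" where
  "degree E v = card {e \<in> E. v \<in> e}"

definition t_odd :: "nat set \<Rightarrow> nat set set \<Rightarrow> nat" where
  "t_odd V E = card {v \<in> V. odd (degree E v)} div 2"

fun walk_edges :: "nat list \<Rightarrow> nat set list" where
  "walk_edges (u # v # ws) = {u, v} # walk_edges (v # ws)"
| "walk_edges _ = []"

definition eulerian :: "nat set set \<Rightarrow> bool" where
  "eulerian E \<longleftrightarrow> (\<exists>ws. ws \<noteq> [] \<and> hd ws = last ws \<and>
      (\<forall>e \<in> set (walk_edges ws). card e = 2) \<and>
      distinct (walk_edges ws) \<and> set (walk_edges ws) = E)"

definition eulerian_extension :: "nat set \<Rightarrow> nat set set \<Rightarrow> nat set set \<Rightarrow> bool" where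
  "eulerian_extension V E F \<longleftrightarrow> E \<subseteq> F \<and> F \<subseteq> all_pairs V \<and> eulerian F"

(* N_ext(G); equals \<infinity> if G is not Eulerian extendable *)
definition N_ext :: "nat set \<Rightarrow> nat set set \<Rightarrow> enat" where
  "N_ext V E = (INF F \<in> {F. eulerian_extension V E F}. enat (card (F - E)))"

definition connected_graph :: "nat set \<Rightarrow> nat set set \<Rightarrow> bool" where
  "connected_graph V E \<longleftrightarrow>
     (\<forall>u \<in> V. \<forall>v \<in> V. (u, v) \<in> {(x, y). {x, y} \<in> E}\<^sup>*)"

definition graph_prob :: "nat \<Rightarrow> (nat set \<Rightarrow> real) \<Rightarrow> (nat set set \<Rightarrow> bool) \<Rightarrow> real" where
  "graph_prob n p P =
     (\<Sum>S \<in> {S. S \<subseteq> Kn_edges n \<and> P S}.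
        (\<Prod>h \<in> S. p h) * (\<Prod>h \<in> Kn_edges n - S. 1 - p h))"

definition alpha_low :: "nat \<Rightarrow> (nat set \<Rightarrow> real) \<Rightarrow> real" where
  "alpha_low n p = Min ((\<lambda>u. (\<Sum>v \<in> {1..n} - {u}. p {u, v}) / real (n - 1)) ` {1..n})"

definition alpha_up :: "nat \<Rightarrow> (nat set \<Rightarrow> real) \<Rightarrow> real" where
  "alpha_up n p = Max ((\<lambda>u. (\<Sum>v \<in> {1..n} - {u}. p {u, v}) / real (n - 1)) ` {1..n})"

definition alpha_e :: "nat \<Rightarrow> (nat set \<Rightarrow> real) \<Rightarrow> real" where
  "alpha_e n p = (\<Sum>h \<in> Kn_edges n. p h) / real (n choose 2)"

end

theory Submission
  imports Defs "HOL-Library.Multiset"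
begin


definition trail :: "nat set set \<Rightarrow> nat list \<Rightarrow> bool" where
  "trail F ws \<longleftrightarrow> ws \<noteq> [] \<and> (\<forall>e\<in>set (walk_edges ws). card e = 2) \<and>
     distinct (walk_edges ws) \<and> set (walk_edges ws) \<subseteq> F"

lemma we_append: "walk_edges (as @ c # bs) = walk_edges (as @ [c]) @ walk_edges (c # bs)"
  by (induction as rule: induct_list012) auto

lemma we_snoc: "ws \<noteq> [] \<Longrightarrow> walk_edges (ws @ [z]) = walk_edges ws @ [{last ws, z}]"
  by (induction ws rule: induct_list012) auto

lemma we_vertices: "e \<in> set (walk_edges ws) \<Longrightarrow> e \<subseteq> set ws"
  by (induction ws rule: walk_edges.induct) auto

lemma we_parity:
  "(\<forall>e\<in>set (walk_edges ws). card e = 2) \<Longrightarrow> ws \<noteq> [] \<Longrightarrow>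
   even (length (filter (\<lambda>e. v \<in> e) (walk_edges ws)) + (if hd ws = v then 1 else 0)
        + (if last ws = v then 1 else 0))"
proof (induction ws rule: walk_edges.induct)
  case (1 u w ws)
  have uw: "u \<noteq> w" using 1(2) by (cases "u = w") auto
  have IH: "even (length (filter (\<lambda>e. v \<in> e) (walk_edges (w # ws))) + (if w = v then 1 else 0)
        + (if last (w # ws) = v then 1 else 0))" using 1 by auto
  show ?case using IH uw by auto
next
  case ("2_1")
  then show ?case by simp
next
  case ("2_2" v)
  then show ?case by simp
qed

lemma rotate_closed:
  assumes "hd ws = last ws" "w \<in> set ws"
  shows "\<exists>ws'. ws' \<noteq> [] \<and> hd ws' = w \<and> last ws' = w \<and> mset (walk_edges ws') = mset (walk_edges ws)"
proof -
  obtain xs ys where ws: "ws = xs @ w # ys" using assms(2) split_list by metis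
  show ?thesis
  proof (cases xs)
    case Nil
    then show ?thesis using ws assms(1) by (intro exI[of _ "w # ys"]) (auto split: if_splits)
  next
    case (Cons x xs')
    have lx: "last (w # ys) = x" using assms(1) ws Cons by auto
    then obtain ys0 where ys0: "w # ys = ys0 @ [x]"
      by (metis append_butlast_last_id list.distinct(1))
    define ws' where "ws' = ys0 @ x # (xs' @ [w])"
    have "walk_edges ws' = walk_edges (w # ys) @ walk_edges (x # xs' @ [w])"
      unfolding ws'_def by (subst we_append) (simp add: ys0)
    moreover have "walk_edges ws = walk_edges (x # xs' @ [w]) @ walk_edges (w # ys)"
      unfolding ws Cons using we_append[of "x # xs'" w ys] by simp
    ultimately have "mset (walk_edges ws') = mset (walk_edges ws)" by simp
    moreover have "hd ws' = w"
      unfolding ws'_def by (metis hd_append list.sel(1) self_append_conv2 ys0 list.distinct(1))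
    ultimately show ?thesis unfolding ws'_def by auto
  qed
qed

lemma trail_mset:
  assumes "trail F ws" "ws' \<noteq> []" "mset (walk_edges ws') = mset (walk_edges ws)"
  shows "trail F ws'"
proof -
  have "set (walk_edges ws') = set (walk_edges ws)" by (metis assms(3) set_mset_mset)
  moreover have "distinct (walk_edges ws')" using assms
    using mset_eq_imp_distinct_iff unfolding trail_def by metis
  ultimately show ?thesis using assms unfolding trail_def by auto
qed

lemma trail_snoc:
  assumes "trail F ws" "{last ws, z} \<in> F" "last ws \<noteq> z" "{last ws, z} \<notin> set (walk_edges ws)"
  shows "trail F (ws @ [z]) \<and> length (walk_edges (ws @ [z])) = Suc (length (walk_edges ws))"
  using assms we_snoc[of ws z] unfolding trail_def by auto

lemma all_pairs_sub: "e \<in> all_pairs V \<Longrightarrow> e \<subseteq> V"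
  unfolding all_pairs_def by auto

lemma euler:
  assumes fF: "finite F" and FV: "F \<subseteq> all_pairs V"
    and ev: "\<forall>v. even (degree F v)"
    and conn: "\<forall>u\<in>V. \<forall>v\<in>V. (u, v) \<in> {(x, y). {x, y} \<in> F}\<^sup>*"
  shows "eulerian F"
proof (cases "F = {}")
  case True
  then show ?thesis unfolding eulerian_def by (intro exI[of _ "[0]"]) auto
next
  case False
  then obtain e0 where e0: "e0 \<in> F" by auto
  then obtain a b where ab: "e0 = {a, b}" "a \<noteq> b" using FV unfolding all_pairs_def by auto
  have t0: "trail F [a, b]" using ab e0 unfolding trail_def by auto
  have bnd: "\<forall>ws. trail F ws \<longrightarrow> length (walk_edges ws) < Suc (card F)"
  proof (intro allI impI)
    fix ws assume "trail F ws"
    then have "length (walk_edges ws) = card (set (walk_edges ws))" "set (walk_edges ws) \<subseteq> F"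
      unfolding trail_def by (auto simp: distinct_card)
    then show "length (walk_edges ws) < Suc (card F)" by (metis card_mono[OF fF] le_imp_less_Suc)
  qed
  from ex_has_greatest_nat[of "trail F" "[a,b]" "\<lambda>ws. length (walk_edges ws)", OF t0 bnd]
  obtain ws where tws: "trail F ws" and maxw: "\<forall>ws'. trail F ws' \<longrightarrow> length (walk_edges ws') \<le> length (walk_edges ws)"
    by (elim exE conjE) (rule that)
  have len1: "1 \<le> length (walk_edges ws)" using maxw t0 by fastforce
  have c2: "\<forall>e\<in>set (walk_edges ws). card e = 2" and dist: "distinct (walk_edges ws)"
    and sub: "set (walk_edges ws) \<subseteq> F" and ne: "ws \<noteq> []" using tws unfolding trail_def by auto
  have closed: "hd ws = last ws"
  proof (rule ccontr)
    assume nc: "hd ws \<noteq> last ws"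
    define v where "v = last ws"
    have "even (length (filter (\<lambda>e. v \<in> e) (walk_edges ws)) + (if hd ws = v then 1 else 0)
        + (if last ws = v then 1 else 0))" by (rule we_parity[OF c2 ne])
    moreover have "card {e \<in> set (walk_edges ws). v \<in> e} = length (filter (\<lambda>e. v \<in> e) (walk_edges ws))"
      using distinct_card[of "filter (\<lambda>e. v \<in> e) (walk_edges ws)"] dist by simp
    ultimately have od: "odd (card {e \<in> set (walk_edges ws). v \<in> e})"
      using nc unfolding v_def by simp
    have "{e \<in> set (walk_edges ws). v \<in> e} \<noteq> {e \<in> F. v \<in> e}"
      using od ev unfolding degree_def by metis
    then obtain e where e: "e \<in> F" "v \<in> e" "e \<notin> set (walk_edges ws)" using sub by blast
    then obtain z where z: "e = {v, z}" "v \<noteq> z" using FV unfolding all_pairs_def by blast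
    have "trail F (ws @ [z]) \<and> length (walk_edges (ws @ [z])) = Suc (length (walk_edges ws))"
      by (rule trail_snoc[OF tws]) (use e z v_def in auto)
    then show False using maxw by fastforce
  qed
  have cover: "F \<subseteq> set (walk_edges ws)"
  proof
    fix e assume eF: "e \<in> F"
    show "e \<in> set (walk_edges ws)"
    proof (rule ccontr)
      assume en: "e \<notin> set (walk_edges ws)"
      obtain x y rest where ws3: "ws = x # y # rest" using len1
        by (cases ws rule: walk_edges.cases) auto
      have "{x, y} \<in> F" using sub ws3 by auto
      then have xV: "x \<in> V" using FV all_pairs_sub by blast
      obtain a' b' where eab: "e = {a', b'}" "a' \<in> V" using eF FV unfolding all_pairs_def by blast
      have reach: "(x, a') \<in> {(x, y). {x, y} \<in> F}\<^sup>*" using conn xV eab by auto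
      have "\<And>c. (x, c) \<in> {(x, y). {x, y} \<in> F}\<^sup>* \<Longrightarrow>
          c \<in> set ws \<or> (\<exists>f\<in>F - set (walk_edges ws). \<exists>w\<in>set ws. w \<in> f)"
      proof -
        fix c assume "(x, c) \<in> {(x, y). {x, y} \<in> F}\<^sup>*"
        then show "c \<in> set ws \<or> (\<exists>f\<in>F - set (walk_edges ws). \<exists>w\<in>set ws. w \<in> f)"
        proof (induction rule: rtrancl_induct)
          case base
          then show ?case using ws3 by auto
        next
          case (step c d)
          show ?case
          proof (cases "c \<in> set ws")
            case True
            show ?thesis
            proof (cases "{c, d} \<in> set (walk_edges ws)")
              case True
              then show ?thesis using we_vertices by blast
            next
              case False
              have "{c, d} \<in> F" using step(2) by auto
              then show ?thesis using False \<open>c \<in> set ws\<close> by blast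
            qed
          next
            case False
            then show ?thesis using step(3) by blast
          qed
        qed
      qed
      from this[OF reach] obtain f w where f: "f \<in> F" "f \<notin> set (walk_edges ws)" "w \<in> set ws" "w \<in> f"
        using eF en eab by blast
      then obtain z where z: "f = {w, z}" "w \<noteq> z" using FV unfolding all_pairs_def by blast
      obtain ws' where ws': "ws' \<noteq> []" "hd ws' = w" "last ws' = w" "mset (walk_edges ws') = mset (walk_edges ws)"
        using rotate_closed[OF closed f(3)] by blast
      have tws': "trail F ws'" by (rule trail_mset[OF tws ws'(1) ws'(4)])
      have se: "set (walk_edges ws') = set (walk_edges ws)" by (metis ws'(4) set_mset_mset)
      have le: "length (walk_edges ws') = length (walk_edges ws)" by (metis ws'(4) size_mset)
      have "trail F (ws' @ [z]) \<and> length (walk_edges (ws' @ [z])) = Suc (length (walk_edges ws'))"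
        by (rule trail_snoc[OF tws']) (use f z ws' se in auto)
      then show False using maxw le by fastforce
    qed
  qed
  show ?thesis unfolding eulerian_def
    using ne closed c2 dist sub cover by (intro exI[of _ ws]) auto
qed



definition wt :: "nat \<Rightarrow> (nat set \<Rightarrow> real) \<Rightarrow> nat set set \<Rightarrow> real" where
  "wt n p S = (\<Prod>h \<in> S. p h) * (\<Prod>h \<in> Kn_edges n - S. 1 - p h)"

lemma finite_Kn: "finite (Kn_edges n)"
proof -
  have "Kn_edges n \<subseteq> Pow {1..n}" unfolding Kn_edges_def all_pairs_def by auto
  then show ?thesis by (rule finite_subset) auto
qed

lemma gp_eq: "graph_prob n p P = (\<Sum>S\<in>Pow (Kn_edges n). if P S then wt n p S else 0)"
proof -
  have "{S. S \<subseteq> Kn_edges n \<and> P S} = {S \<in> Pow (Kn_edges n). P S}" by auto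
  then have "graph_prob n p P = (\<Sum>S\<in>{S \<in> Pow (Kn_edges n). P S}. wt n p S)"
    unfolding graph_prob_def wt_def by simp
  also have "\<dots> = (\<Sum>S\<in>Pow (Kn_edges n). if P S then wt n p S else 0)"
    by (rule sum.inter_filter) (simp add: finite_Kn)
  finally show ?thesis .
qed

lemma wt_nonneg:
  assumes "\<forall>h \<in> Kn_edges n. 0 \<le> p h \<and> p h \<le> 1" "S \<subseteq> Kn_edges n"
  shows "0 \<le> wt n p S"
  unfolding wt_def using assms
  by (intro mult_nonneg_nonneg prod_nonneg) auto

lemma wt_total: "(\<Sum>S\<in>Pow (Kn_edges n). wt n p S) = 1"
proof -
  have "(\<Prod>h\<in>Kn_edges n. p h + (1 - p h)) = (\<Sum>S\<in>Pow (Kn_edges n). wt n p S)"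
    unfolding wt_def by (rule prod_add[OF finite_Kn])
  then show ?thesis by simp
qed

lemma gp_compl: "graph_prob n p P + graph_prob n p (\<lambda>S. \<not> P S) = 1"
  unfolding gp_eq sum.distrib[symmetric] using wt_total[of n p]
  by (smt (verit, ccfv_SIG) sum.cong)

lemma gp_mono:
  assumes "\<forall>h \<in> Kn_edges n. 0 \<le> p h \<and> p h \<le> 1"
    and "\<And>S. S \<subseteq> Kn_edges n \<Longrightarrow> P S \<Longrightarrow> Q S"
  shows "graph_prob n p P \<le> graph_prob n p Q"
  unfolding gp_eq
  by (rule sum_mono) (use assms wt_nonneg[OF assms(1)] in auto)

lemma gp_disj:
  assumes "\<forall>h \<in> Kn_edges n. 0 \<le> p h \<and> p h \<le> 1"
  shows "graph_prob n p (\<lambda>S. P S \<or> Q S) \<le> graph_prob n p P + graph_prob n p Q"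
  unfolding gp_eq sum.distrib[symmetric]
  by (rule sum_mono) (use assms wt_nonneg[OF assms(1)] in auto)

lemma gp_nonneg:
  assumes "\<forall>h \<in> Kn_edges n. 0 \<le> p h \<and> p h \<le> 1"
  shows "0 \<le> graph_prob n p P"
  unfolding gp_eq
  by (rule sum_nonneg) (use assms wt_nonneg[OF assms(1)] in auto)

lemma gp_ex:
  assumes "\<forall>h \<in> Kn_edges n. 0 \<le> p h \<and> p h \<le> 1" "finite U"
  shows "graph_prob n p (\<lambda>S. \<exists>u\<in>U. P u S) \<le> (\<Sum>u\<in>U. graph_prob n p (P u))"
  using assms(2)
proof (induction U rule: finite_induct)
  case empty
  then show ?case by (simp add: gp_eq)
next
  case (insert x F)
  have "graph_prob n p (\<lambda>S. \<exists>u\<in>insert x F. P u S) = graph_prob n p (\<lambda>S. P x S \<or> (\<exists>u\<in>F. P u S))"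
    by simp
  also have "\<dots> \<le> graph_prob n p (P x) + graph_prob n p (\<lambda>S. \<exists>u\<in>F. P u S)"
    by (rule gp_disj[OF assms(1)])
  also have "\<dots> \<le> graph_prob n p (P x) + (\<Sum>u\<in>F. graph_prob n p (P u))"
    using insert by simp
  finally show ?case using insert by simp
qed

lemma chernoff:
  fixes a m :: real
  assumes p01: "\<forall>h \<in> Kn_edges n. 0 \<le> p h \<and> p h \<le> 1" and BK: "B \<subseteq> Kn_edges n"
    and cB: "real (card B) \<le> m" and a0: "0 < a" and am: "a \<le> 2 * m"
  shows "graph_prob n p (\<lambda>S. real (card (S \<inter> B)) \<ge> (\<Sum>h\<in>B. p h) + a) \<le> exp (- (a^2) / (4 * m))"
proof -
  define K where "K = Kn_edges n"
  have fK: "finite K" unfolding K_def by (rule finite_Kn)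
  have fB: "finite B" using BK fK finite_subset unfolding K_def by blast
  define \<mu> where "\<mu> = (\<Sum>h\<in>B. p h)"
  have m0: "0 < m" using a0 am by linarith
  define l where "l = a / (2 * m)"
  have l0: "0 < l" and l1: "l \<le> 1" using a0 am m0 unfolding l_def by (auto simp: field_simps)
  define c where "c h = (if h \<in> B then exp l else 1)" for h
  have prodc: "(\<Prod>h\<in>S. c h) = exp (l * real (card (S \<inter> B)))" if "S \<subseteq> K" for S
  proof -
    have fS: "finite S" using that fK finite_subset by blast
    have "(\<Prod>h\<in>S. c h) = (\<Prod>h\<in>S \<inter> B. exp l)"
      unfolding c_def using prod.inter_filter[OF fS, of "\<lambda>_. exp l" "\<lambda>h. h \<in> B"]
      by (simp add: Int_def)
    also have "\<dots> = exp l ^ card (S \<inter> B)" by simp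
    also have "\<dots> = exp (l * real (card (S \<inter> B)))"
      by (metis exp_of_nat_mult mult.commute)
    finally show ?thesis .
  qed
  have "graph_prob n p (\<lambda>S. real (card (S \<inter> B)) \<ge> \<mu> + a)
      \<le> (\<Sum>S\<in>Pow K. wt n p S * exp (l * (real (card (S \<inter> B)) - \<mu> - a)))"
    unfolding gp_eq K_def
  proof (rule sum_mono)
    fix S assume S: "S \<in> Pow (Kn_edges n)"
    have w0: "0 \<le> wt n p S" using wt_nonneg[OF p01] S by auto
    show "(if \<mu> + a \<le> real (card (S \<inter> B)) then wt n p S else 0)
        \<le> wt n p S * exp (l * (real (card (S \<inter> B)) - \<mu> - a))"
    proof (cases "\<mu> + a \<le> real (card (S \<inter> B))")
      case True
      then have "1 \<le> exp (l * (real (card (S \<inter> B)) - \<mu> - a))" using l0 by simp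
      then show ?thesis using True w0 by (simp add: mult_le_cancel_left1)
    qed (use w0 in auto)
  qed
  also have "\<dots> = exp (- l * (\<mu> + a)) * (\<Sum>S\<in>Pow K. wt n p S * (\<Prod>h\<in>S. c h))"
    unfolding sum_distrib_left
  proof (rule sum.cong[OF refl])
    fix S assume "S \<in> Pow K"
    then have "(\<Prod>h\<in>S. c h) = exp (l * real (card (S \<inter> B)))" using prodc by auto
    then show "wt n p S * exp (l * (real (card (S \<inter> B)) - \<mu> - a)) =
        exp (- l * (\<mu> + a)) * (wt n p S * (\<Prod>h\<in>S. c h))"
      by (simp add: exp_add[symmetric] algebra_simps)
  qed
  also have "(\<Sum>S\<in>Pow K. wt n p S * (\<Prod>h\<in>S. c h)) = (\<Prod>h\<in>K. p h * c h + (1 - p h))"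
    unfolding wt_def K_def[symmetric] prod_add[OF fK]
    by (rule sum.cong[OF refl]) (simp add: prod.distrib algebra_simps)
  also have "\<dots> \<le> (\<Prod>h\<in>K. exp (if h \<in> B then p h * (l + l^2) else 0))"
  proof (rule prod_mono)
    fix h assume hK: "h \<in> K"
    have p0: "0 \<le> p h" "p h \<le> 1" using p01 hK unfolding K_def by auto
    show "0 \<le> p h * c h + (1 - p h) \<and> p h * c h + (1 - p h) \<le> exp (if h \<in> B then p h * (l + l^2) else 0)"
    proof (cases "h \<in> B")
      case True
      have e: "exp l \<le> 1 + l + l^2" using exp_bound l0 l1 by simp
      have "p h * exp l + (1 - p h) \<le> 1 + p h * (l + l^2)"
        using mult_left_mono[OF e p0(1)] by (simp add: algebra_simps)
      also have "\<dots> \<le> exp (p h * (l + l^2))" by (rule exp_ge_add_one_self)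
      finally show ?thesis using True p0 unfolding c_def by (simp add: add_nonneg_nonneg)
    qed (use p0 c_def in auto)
  qed
  also have "\<dots> = exp ((l + l^2) * \<mu>)"
  proof -
    have "(\<Sum>h\<in>K. (if h \<in> B then p h * (l + l^2) else 0)) = (\<Sum>h\<in>B. p h * (l + l^2))"
      using BK fK unfolding K_def by (simp add: sum.If_cases Int_absorb1)
    then show ?thesis unfolding exp_sum[OF fK, symmetric] \<mu>_def
      by (simp add: sum_distrib_right mult.commute)
  qed
  finally have 1: "graph_prob n p (\<lambda>S. real (card (S \<inter> B)) \<ge> \<mu> + a)
      \<le> exp (- l * (\<mu> + a)) * exp ((l + l^2) * \<mu>)"
    by (simp add: mult_left_mono)
  have "\<mu> \<le> real (card B)" unfolding \<mu>_def
    using sum_bounded_above[of B p 1] p01 BK by auto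
  then have \<mu>m: "\<mu> \<le> m" using cB by linarith
  have "exp (- l * (\<mu> + a)) * exp ((l + l^2) * \<mu>) = exp (- l * a + l^2 * \<mu>)"
    by (simp add: exp_add[symmetric] algebra_simps)
  also have "\<dots> \<le> exp (- l * a + l^2 * m)"
    using \<mu>m by (simp add: mult_left_mono)
  also have "- l * a + l^2 * m = - (a^2) / (4 * m)"
    unfolding l_def using m0 by (simp add: field_simps power2_eq_square)
  finally show ?thesis using 1 unfolding \<mu>_def by simp
qed



lemma deg_symdiff:
  assumes "finite A" "finite B"
  shows "odd (degree ((A - B) \<union> (B - A)) v) \<longleftrightarrow> (odd (degree A v) \<noteq> odd (degree B v))"
proof -
  define a where "a = {e\<in>A. v \<in> e}"
  define b where "b = {e\<in>B. v \<in> e}"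
  have fa: "finite a" "finite b" using assms unfolding a_def b_def by auto
  have eq: "{e \<in> (A - B) \<union> (B - A). v \<in> e} = (a - b) \<union> (b - a)" unfolding a_def b_def by auto
  have "card ((a - b) \<union> (b - a)) = card (a - b) + card (b - a)"
    by (rule card_Un_disjoint) (use fa in auto)
  moreover have "card (a - b) = card a - card (a \<inter> b)" by (rule card_Diff_subset_Int) (use fa in auto)
  moreover have "card (b - a) = card b - card (a \<inter> b)"
    using card_Diff_subset_Int[of a b] fa by (simp add: Int_commute card_Diff_subset_Int)
  moreover have "card (a \<inter> b) \<le> card a" "card (a \<inter> b) \<le> card b"
    using fa by (auto intro: card_mono)
  ultimately show ?thesis unfolding degree_def eq a_def[symmetric] b_def[symmetric]
    by presburger
qed

lemma distinct_walk:
  "distinct ws \<Longrightarrow> (\<forall>e\<in>set (walk_edges ws). card e = 2) \<and> distinct (walk_edges ws)"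
proof (induction ws rule: walk_edges.induct)
  case (1 u w ws)
  have "{u, w} \<notin> set (walk_edges (w # ws))"
    using we_vertices[of "{u,w}" "w # ws"] 1(2) by auto
  then show ?case using 1 by auto
qed auto

lemma path_join:
  assumes "distinct ws" "2 \<le> length ws"
  shows "\<forall>x. odd (degree (set (walk_edges ws)) x) \<longleftrightarrow> x = hd ws \<or> x = last ws"
    and "card (set (walk_edges ws)) \<le> length ws - 1"
proof -
  have c2: "\<forall>e\<in>set (walk_edges ws). card e = 2" and d: "distinct (walk_edges ws)"
    using distinct_walk[OF assms(1)] by auto
  have ne: "ws \<noteq> []" using assms by auto
  have hl: "hd ws \<noteq> last ws"
  proof -
    obtain x y r where "ws = x # y # r" using assms(2)
      by (metis One_nat_def Suc_1 Suc_le_length_iff)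
    then show ?thesis using assms(1) by (cases r rule: rev_cases) auto
  qed
  show "\<forall>x. odd (degree (set (walk_edges ws)) x) \<longleftrightarrow> x = hd ws \<or> x = last ws"
  proof
    fix x
    have p: "even (length (filter (\<lambda>e. x \<in> e) (walk_edges ws)) + (if hd ws = x then 1 else 0)
        + (if last ws = x then 1 else 0))" by (rule we_parity[OF c2 ne])
    have "degree (set (walk_edges ws)) x = length (filter (\<lambda>e. x \<in> e) (walk_edges ws))"
      unfolding degree_def using distinct_card[of "filter (\<lambda>e. x \<in> e) (walk_edges ws)"] d by simp
    then show "odd (degree (set (walk_edges ws)) x) \<longleftrightarrow> x = hd ws \<or> x = last ws"
      using p hl by (auto split: if_splits)
  qed
  have "length (walk_edges ws) = length ws - 1"
    by (induction ws rule: walk_edges.induct) auto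
  then show "card (set (walk_edges ws)) \<le> length ws - 1"
    using card_length[of "walk_edges ws"] by simp
qed

definition nbr_c :: "nat set \<Rightarrow> nat set set \<Rightarrow> nat \<Rightarrow> nat set" where
  "nbr_c V S x = {w \<in> V. w \<noteq> x \<and> {x, w} \<notin> S}"

lemma all_pairs_mem: "{a, b} \<in> all_pairs V \<longleftrightarrow> a \<in> V \<and> b \<in> V \<and> a \<noteq> b"
  unfolding all_pairs_def by (auto simp: doubleton_eq_iff)

lemma short_path:
  assumes fV: "finite V" and SV: "S \<subseteq> all_pairs V" and u: "u \<in> V" and v: "v \<in> V" and uv: "u \<noteq> v"
    and cond: "card (nbr_c V S u) + card (nbr_c V S v) > card V - 2 \<or>
               card (nbr_c V S u) * card (nbr_c V S v) > card S"
  shows "\<exists>ws. distinct ws \<and> hd ws = u \<and> last ws = v \<and> 2 \<le> length ws \<and> length ws \<le> 4 \<and>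
             set (walk_edges ws) \<subseteq> all_pairs V - S"
proof (cases "{u, v} \<in> S")
  case False
  then show ?thesis using u v uv by (intro exI[of _ "[u, v]"]) (auto simp: all_pairs_mem)
next
  case uvS: True
  let ?A = "nbr_c V S u" and ?B = "nbr_c V S v"
  show ?thesis
  proof (cases "?A \<inter> ?B = {}")
    case False
    then obtain w where w: "w \<in> ?A" "w \<in> ?B" by blast
    then have "w \<noteq> u" "w \<noteq> v" "{u, w} \<notin> S" "{v, w} \<notin> S" "w \<in> V" unfolding nbr_c_def by auto
    then show ?thesis using u v uv
      by (intro exI[of _ "[u, w, v]"]) (auto simp: all_pairs_mem insert_commute)
  next
    case disj: True
    show ?thesis
    proof (cases "\<exists>a\<in>?A. \<exists>b\<in>?B. {a, b} \<notin> S")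
      case True
      then obtain a b where ab: "a \<in> ?A" "b \<in> ?B" "{a, b} \<notin> S" by blast
      have "a \<noteq> b" using ab disj by auto
      moreover have "a \<noteq> v" using ab(1) uvS by (auto simp: nbr_c_def)
      moreover have "b \<noteq> u" using ab(2) uvS by (auto simp: nbr_c_def insert_commute)
      moreover have "a \<noteq> u" "b \<noteq> v" "{u, a} \<notin> S" "{v, b} \<notin> S" "a \<in> V" "b \<in> V"
        using ab unfolding nbr_c_def by auto
      ultimately show ?thesis using u v uv ab(3)
        by (intro exI[of _ "[u, a, b, v]"]) (auto simp: all_pairs_mem insert_commute)
    next
      case False
      have fA: "finite ?A" "finite ?B" using fV unfolding nbr_c_def by auto
      have fS: "finite S"
      proof -
        have "all_pairs V \<subseteq> Pow V" unfolding all_pairs_def by auto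
        then show ?thesis using SV fV finite_subset by (metis finite_Pow_iff)
      qed
      show ?thesis
      proof (cases "card ?A + card ?B > card V - 2")
        case True
        have "?A \<subseteq> V - {u, v}" "?B \<subseteq> V - {u, v}" using uvS unfolding nbr_c_def
          by (auto simp: insert_commute)
        then have "?A \<union> ?B \<subseteq> V - {u, v}" by blast
        then have "card (?A \<union> ?B) \<le> card (V - {u, v})" using fV by (intro card_mono) auto
        also have "\<dots> = card V - 2" using u v uv fV by (simp add: card_Diff_subset)
        finally show ?thesis using True card_Un_disjoint[OF fA disj] by linarith
      next
        case cF: False
        then have big: "card ?A * card ?B > card S" using cond by auto
        have inj: "inj_on (\<lambda>(a, b). {a, b}) (?A \<times> ?B)"
          using disj by (auto simp: inj_on_def doubleton_eq_iff)
        have "(\<lambda>(a, b). {a, b}) ` (?A \<times> ?B) \<subseteq> S" using False by auto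
        then have "card ((\<lambda>(a, b). {a, b}) ` (?A \<times> ?B)) \<le> card S" using fS by (intro card_mono) auto
        then have "card ?A * card ?B \<le> card S"
          using card_image[OF inj] card_cartesian_product by metis
        then show ?thesis using big by linarith
      qed
    qed
  qed
qed

lemma tjoin:
  assumes fV: "finite V" and SV: "S \<subseteq> all_pairs V"
    and pair: "\<forall>u\<in>V. \<forall>v\<in>V. u \<noteq> v \<longrightarrow> (\<exists>J. J \<subseteq> all_pairs V - S \<and> finite J \<and> card J \<le> 3 \<and>
                 (\<forall>x. odd (degree J x) \<longleftrightarrow> x = u \<or> x = v))"
  shows "T \<subseteq> V \<Longrightarrow> even (card T) \<Longrightarrow> \<exists>J. J \<subseteq> all_pairs V - S \<and> finite J \<and>
            card J \<le> 3 * (card T div 2) \<and> (\<forall>x. odd (degree J x) \<longleftrightarrow> x \<in> T)"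
proof (induction "card T" arbitrary: T rule: less_induct)
  case less
  show ?case
  proof (cases "T = {}")
    case True
    then show ?thesis by (intro exI[of _ "{}"]) (auto simp: degree_def)
  next
    case False
    then obtain u where uT: "u \<in> T" by blast
    have fT: "finite T" using less.prems fV finite_subset by blast
    have "card T \<noteq> 1" using less.prems by auto
    have "T - {u} \<noteq> {}"
    proof
      assume "T - {u} = {}"
      then have "T = {u}" using uT by auto
      then show False using \<open>card T \<noteq> 1\<close> by simp
    qed
    then obtain v where vT: "v \<in> T" "v \<noteq> u" by blast
    define T' where "T' = T - {u, v}"
    have cT': "card T' = card T - 2" unfolding T'_def using uT vT fT by (simp add: card_Diff_subset)
    have "card {u, v} \<le> card T" using uT vT fT by (intro card_mono) auto
    then have cT2: "card T \<ge> 2" using vT(2) by simp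
    have h1: "card T' < card T" "T' \<subseteq> V" "even (card T')" using cT' cT2 less.prems unfolding T'_def by auto
    have "\<exists>J. J \<subseteq> all_pairs V - S \<and> finite J \<and>
            card J \<le> 3 * (card T' div 2) \<and> (\<forall>x. odd (degree J x) \<longleftrightarrow> x \<in> T')"
      by (rule less.hyps[OF h1(1)]) (use h1 in auto)
    then obtain J' where J': "J' \<subseteq> all_pairs V - S" "finite J'" "card J' \<le> 3 * (card T' div 2)"
      "\<forall>x. odd (degree J' x) \<longleftrightarrow> x \<in> T'" by blast
    obtain J1 where J1: "J1 \<subseteq> all_pairs V - S" "finite J1" "card J1 \<le> 3"
      "\<forall>x. odd (degree J1 x) \<longleftrightarrow> x = u \<or> x = v"
    proof -
      have uV: "u \<in> V" "v \<in> V" using uT vT less.prems(1) by auto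
      have "\<exists>J. J \<subseteq> all_pairs V - S \<and> finite J \<and> card J \<le> 3 \<and>
                 (\<forall>x. odd (degree J x) \<longleftrightarrow> x = u \<or> x = v)"
        using pair uV vT(2) by auto
      then show ?thesis using that by blast
    qed
    define J where "J = (J' - J1) \<union> (J1 - J')"
    have "J \<subseteq> all_pairs V - S" "finite J" using J' J1 unfolding J_def by auto
    moreover have "card J \<le> card J' + card J1"
    proof -
      have "card J \<le> card (J' - J1) + card (J1 - J')" unfolding J_def by (rule card_Un_le)
      also have "\<dots> \<le> card J' + card J1" using J'(2) J1(2) by (intro add_mono card_mono) auto
      finally show ?thesis .
    qed
    moreover have "3 * (card T' div 2) + 3 = 3 * (card T div 2)"
    proof -
      have "(card T - 2) div 2 + 1 = card T div 2" using cT2 by presburger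
      then show ?thesis using cT' by simp
    qed
    moreover have "\<forall>x. odd (degree J x) \<longleftrightarrow> x \<in> T"
      unfolding J_def using deg_symdiff[OF J'(2) J1(2)] J'(4) J1(4) uT vT T'_def by auto
    ultimately show ?thesis using J'(3) J1(3) by (intro exI[of _ J]) auto
  qed
qed

lemma degree_insert: "e \<notin> S \<Longrightarrow> finite S \<Longrightarrow> degree (insert e S) v = degree S v + (if v \<in> e then 1 else 0)"
proof -
  have "{e' \<in> insert e S. v \<in> e'} = (if v \<in> e then insert e {e' \<in> S. v \<in> e'} else {e' \<in> S. v \<in> e'})"
    by auto
  then show "e \<notin> S \<Longrightarrow> finite S \<Longrightarrow> degree (insert e S) v = degree S v + (if v \<in> e then 1 else 0)"
    unfolding degree_def by simp
qed

lemma handshake_sum: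
  assumes fV: "finite V" and fS: "finite S" and SV: "S \<subseteq> all_pairs V"
  shows "(\<Sum>v\<in>V. degree S v) = 2 * card S"
  using fS SV
proof (induction S rule: finite_induct)
  case empty
  then show ?case by (simp add: degree_def)
next
  case (insert e S)
  have "(\<Sum>v\<in>V. degree (insert e S) v) = (\<Sum>v\<in>V. degree S v) + (\<Sum>v\<in>V. (if v \<in> e then 1 else 0))"
    using insert by (simp add: degree_insert sum.distrib)
  also have "(\<Sum>v\<in>V. (if v \<in> e then 1 else 0::nat)) = card (V \<inter> e)"
    using fV by (simp add: sum.If_cases)
  also have "V \<inter> e = e" using insert(4) all_pairs_sub by blast
  also have "card e = 2" using insert(4) unfolding all_pairs_def by auto
  finally show ?case using insert by simp
qed

lemma sum_parity: "finite V \<Longrightarrow> even (\<Sum>v\<in>V. f v) \<longleftrightarrow> even (card {v\<in>V. odd (f v :: nat)})"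
proof (induction V rule: finite_induct)
  case (insert x F)
  have "{v \<in> insert x F. odd (f v)} = (if odd (f x) then insert x {v\<in>F. odd (f v)} else {v\<in>F. odd (f v)})"
    by auto
  then show ?case using insert by auto
qed auto

lemma handshake:
  assumes fV: "finite V" and SV: "S \<subseteq> all_pairs V"
  shows "even (card {v\<in>V. odd (degree S v)})"
proof -
  have fS: "finite S"
  proof -
    have "all_pairs V \<subseteq> Pow V" unfolding all_pairs_def by auto
    then show ?thesis using SV fV finite_subset by (metis finite_Pow_iff)
  qed
  show ?thesis using handshake_sum[OF fV fS SV] sum_parity[OF fV, of "degree S"] by simp
qed

lemma det_main:
  assumes fV: "finite V" and SV: "S \<subseteq> all_pairs V" and conn: "connected_graph V S"
    and cond: "\<forall>u\<in>V. \<forall>v\<in>V. u \<noteq> v \<longrightarrow>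
        (card (nbr_c V S u) + card (nbr_c V S v) > card V - 2 \<or>
         card (nbr_c V S u) * card (nbr_c V S v) > card S)"
  shows "N_ext V S \<le> enat (3 * t_odd V S)"
proof -
  have pair: "\<forall>u\<in>V. \<forall>v\<in>V. u \<noteq> v \<longrightarrow> (\<exists>J. J \<subseteq> all_pairs V - S \<and> finite J \<and> card J \<le> 3 \<and>
                 (\<forall>x. odd (degree J x) \<longleftrightarrow> x = u \<or> x = v))"
  proof (intro ballI impI)
    fix u v assume uv: "u \<in> V" "v \<in> V" "u \<noteq> v"
    obtain ws where ws: "distinct ws" "hd ws = u" "last ws = v" "2 \<le> length ws" "length ws \<le> 4"
       "set (walk_edges ws) \<subseteq> all_pairs V - S"
      using short_path[OF fV SV uv] cond uv by blast
    show "\<exists>J. J \<subseteq> all_pairs V - S \<and> finite J \<and> card J \<le> 3 \<and> (\<forall>x. odd (degree J x) \<longleftrightarrow> x = u \<or> x = v)"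
      using path_join[OF ws(1) ws(4)] ws by (intro exI[of _ "set (walk_edges ws)"]) auto
  qed
  define T where "T = {v\<in>V. odd (degree S v)}"
  have evT: "even (card T)" unfolding T_def by (rule handshake[OF fV SV])
  obtain J where J: "J \<subseteq> all_pairs V - S" "finite J" "card J \<le> 3 * (card T div 2)"
      "\<forall>x. odd (degree J x) \<longleftrightarrow> x \<in> T"
    using tjoin[OF fV SV pair, of T] evT unfolding T_def by auto
  have fS: "finite S"
  proof -
    have "all_pairs V \<subseteq> Pow V" unfolding all_pairs_def by auto
    then show ?thesis using SV fV finite_subset by (metis finite_Pow_iff)
  qed
  define F where "F = S \<union> J"
  have fF: "finite F" using fS J unfolding F_def by auto
  have FV: "F \<subseteq> all_pairs V" using SV J unfolding F_def by auto
  have degS: "odd (degree S x) \<longleftrightarrow> x \<in> T" for x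
  proof (cases "x \<in> V")
    case False
    then have "{e \<in> S. x \<in> e} = {}" using SV all_pairs_sub by blast
    then have "degree S x = 0" unfolding degree_def by (metis card.empty)
    then show ?thesis using False unfolding T_def by simp
  next
    case True
    then show ?thesis unfolding T_def by simp
  qed
  have degF: "degree F x = degree S x + degree J x" for x
  proof -
    have "{e \<in> F. x \<in> e} = {e \<in> S. x \<in> e} \<union> {e \<in> J. x \<in> e}" unfolding F_def by auto
    moreover have "card ({e \<in> S. x \<in> e} \<union> {e \<in> J. x \<in> e}) = card {e \<in> S. x \<in> e} + card {e \<in> J. x \<in> e}"
      by (rule card_Un_disjoint) (use fS J(1,2) in auto)
    ultimately show ?thesis unfolding degree_def by simp
  qed
  have ev: "\<forall>v. even (degree F v)" using degF degS J(4) by auto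
  have connF: "\<forall>u\<in>V. \<forall>v\<in>V. (u, v) \<in> {(x, y). {x, y} \<in> F}\<^sup>*"
  proof (intro ballI)
    fix u v assume "u \<in> V" "v \<in> V"
    then have "(u, v) \<in> {(x, y). {x, y} \<in> S}\<^sup>*" using conn unfolding connected_graph_def by auto
    moreover have "{(x, y). {x, y} \<in> S} \<subseteq> {(x, y). {x, y} \<in> F}" unfolding F_def by auto
    ultimately show "(u, v) \<in> {(x, y). {x, y} \<in> F}\<^sup>*" using rtrancl_mono by blast
  qed
  have "eulerian F" by (rule euler[OF fF FV ev connF])
  then have ext: "eulerian_extension V S F" unfolding eulerian_extension_def F_def using FV F_def by auto
  have "F - S = J" unfolding F_def using J(1) by auto
  then have "N_ext V S \<le> enat (card J)" unfolding N_ext_def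
    using ext by (metis (mono_tags, lifting) INF_lower mem_Collect_eq)
  also have "\<dots> \<le> enat (3 * t_odd V S)" using J(3) unfolding t_odd_def T_def by simp
  finally show ?thesis .
qed



lemma tail_ev:
  fixes e :: real assumes e: "e > 0"
  shows "\<exists>N0. \<forall>x\<ge>N0. ln (x+1) + (ln x)^2 \<le> x powr e / 4096"
proof -
  define K where "K = 8/e + 16/e^2"
  have K0: "K > 0" using e unfolding K_def by (simp add: add_pos_pos)
  define N0 where "N0 = max 2 ((4096*K) powr (2/e))"
  have "\<forall>x\<ge>N0. ln (x+1) + (ln x)^2 \<le> x powr e / 4096"
  proof (intro allI impI)
    fix x :: real assume x: "x \<ge> N0"
    have x2: "x \<ge> 2" using x unfolding N0_def by auto
    have l0: "0 \<le> ln x" using x2 by simp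
    have xx: "x + 1 \<le> x*x" using mult_right_mono[of 2 x x] x2 by linarith
    have "ln (x+1) \<le> ln (x*x)" using x2 xx by (intro ln_mono) auto
    also have "\<dots> = 2 * ln x" using x2 by (simp add: ln_mult)
    finally have a1: "ln (x+1) \<le> 2 * ln x" .
    have lb: "ln x \<le> x powr (e/4) / (e/4)" by (rule ln_powr_bound) (use x2 e in auto)
    have pe: "x powr (e/4) \<le> x powr (e/2)" using x2 e by (intro powr_mono) auto
    have lb1: "ln x \<le> 4/e * x powr (e/2)" using lb pe e by (simp add: field_simps)
    have "(ln x)^2 \<le> (x powr (e/4) / (e/4))^2" using lb l0 by (intro power_mono) auto
    also have "\<dots> = 16/e^2 * x powr (e/2)"
      using x2 by (simp add: power_divide powr_powr[symmetric] field_simps power2_eq_square powr_add[symmetric])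
    finally have lb2: "(ln x)^2 \<le> 16/e^2 * x powr (e/2)" .
    have s1: "ln (x+1) + (ln x)^2 \<le> K * x powr (e/2)" using a1 lb1 lb2 unfolding K_def by (simp add: algebra_simps)
    have "4096 * K = ((4096*K) powr (2/e)) powr (e/2)" using K0 e by (simp add: powr_powr)
    also have "\<dots> \<le> x powr (e/2)" using x e K0 unfolding N0_def by (intro powr_mono2) auto
    finally have s2: "4096 * K \<le> x powr (e/2)" .
    have "K * x powr (e/2) \<le> (x powr (e/2) / 4096) * x powr (e/2)"
      using s2 by (intro mult_right_mono) auto
    also have "\<dots> = x powr e / 4096" using x2 by (simp add: powr_add[symmetric])
    finally show "ln (x+1) + (ln x)^2 \<le> x powr e / 4096" using s1 by linarith
  qed
  then show ?thesis by blast
qed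



lemma num_tail:
  fixes n :: nat and \<gamma> :: real
  assumes n3: "n \<ge> 3" and g: "0 < \<gamma>" "\<gamma> < 1/2"
    and tail: "ln (real n + 1) + (ln (real n))^2 \<le> real n powr (1 - 2*\<gamma>) / 4096"
  defines "s \<equiv> (real n - 1) / (2 * real n powr \<gamma>)"
  shows "real n * exp (- (s^2) / (4 * real (n - 1))) + exp (- ((s^2/2)^2) / (4 * (real n)^2))
         \<le> exp (- 1 * (ln (real n))^2)"
proof -
  define x where "x = real n"
  have x3: "x \<ge> 3" using n3 unfolding x_def by simp
  define q where "q = x powr \<gamma>"
  have q0: "q > 0" using x3 unfolding q_def by simp
  have qq: "q^2 = x powr (2*\<gamma>)" unfolding q_def using x3
    by (simp add: power2_eq_square powr_add[symmetric])
  define z where "z = x / q^2"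
  have zpow: "x powr (1 - 2*\<gamma>) = z" unfolding z_def qq using x3 by (simp add: powr_diff)
  have "x powr (2*\<gamma>) \<le> x powr 1" using x3 g by (intro powr_mono) auto
  then have qx: "q^2 \<le> x" using qq x3 by simp
  have z1: "z \<ge> 1" unfolding z_def using qx q0 by simp
  have sx: "s = (x - 1) / (2 * q)" unfolding s_def x_def q_def by simp
  have rn1: "real (n - 1) = x - 1" unfolding x_def using n3 by simp
  have e1: "s^2 / (4 * real (n - 1)) = (x - 1) / (16 * q^2)"
    unfolding sx rn1 using x3 q0 by (simp add: field_simps power2_eq_square)
  have "(x - 1) / (16 * q^2) \<ge> (x/2) / (16 * q^2)" using x3 q0 by (intro divide_right_mono) auto
  then have E1: "s^2 / (4 * real (n - 1)) \<ge> z / 32" unfolding e1 z_def by (simp add: field_simps)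
  have e2: "(s^2/2)^2 / (4 * x^2) = (x - 1)^4 / (256 * q^4 * x^2)"
    unfolding sx using x3 q0 by (simp add: field_simps power2_eq_square power4_eq_xxxx)
  have "(x/2)^4 \<le> (x - 1)^4" using x3 by (intro power_mono) auto
  then have "(x - 1)^4 / (256 * q^4 * x^2) \<ge> (x/2)^4 / (256 * q^4 * x^2)"
    using q0 x3 by (intro divide_right_mono) auto
  moreover have "(x/2)^4 / (256 * q^4 * x^2) = z^2 / 4096"
    unfolding z_def using x3 q0 by (simp add: field_simps power2_eq_square power4_eq_xxxx)
  moreover have "z^2 \<ge> z" using z1 by (simp add: power2_eq_square)
  ultimately have E2: "(s^2/2)^2 / (4 * x^2) \<ge> z / 4096" unfolding e2 by linarith
  have A: "x * exp (- (s^2) / (4 * real (n - 1))) \<le> x * exp (- (z / 4096))"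
    using E1 z1 x3 by (intro mult_left_mono) auto
  have B: "exp (- ((s^2/2)^2) / (4 * x^2)) \<le> exp (- (z / 4096))"
    using E2 by (subst exp_le_cancel_iff) linarith
  have "x * exp (- (s^2) / (4 * real (n - 1))) + exp (- ((s^2/2)^2) / (4 * x^2))
      \<le> x * exp (- (z / 4096)) + exp (- (z / 4096))" using A B by linarith
  also have "\<dots> = (x + 1) * exp (- (z / 4096))" by (simp add: algebra_simps)
  also have "\<dots> = exp (ln (x + 1) - z / 4096)"
  proof -
    have "exp (ln (x + 1) - z / 4096) = exp (ln (x + 1)) * exp (- (z / 4096))"
      by (simp add: exp_add[symmetric])
    also have "exp (ln (x + 1)) = x + 1" using x3 by simp
    finally show ?thesis by simp
  qed
  also have "\<dots> \<le> exp (- 1 * (ln x)^2)" using tail zpow unfolding x_def by simp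
  finally show ?thesis unfolding x_def .
qed



lemma nbr_card:
  assumes fV: "finite V" and SV: "S \<subseteq> all_pairs V" and u: "u \<in> V"
  shows "card (nbr_c V S u) + degree S u = card V - 1"
proof -
  define N where "N = {w \<in> V. w \<noteq> u \<and> {u, w} \<in> S}"
  have part: "V - {u} = nbr_c V S u \<union> N" "nbr_c V S u \<inter> N = {}"
    unfolding N_def nbr_c_def by auto
  have bij: "bij_betw (\<lambda>w. {u, w}) N {e \<in> S. u \<in> e}"
  proof (rule bij_betwI')
    show "\<And>x y. x \<in> N \<Longrightarrow> y \<in> N \<Longrightarrow> ({u, x} = {u, y}) = (x = y)"
      unfolding N_def by (auto simp: doubleton_eq_iff)
    show "\<And>x. x \<in> N \<Longrightarrow> {u, x} \<in> {e \<in> S. u \<in> e}" unfolding N_def by auto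
    fix e assume e: "e \<in> {e \<in> S. u \<in> e}"
    then obtain a b where ab: "e = {a, b}" "a \<in> V" "b \<in> V" "a \<noteq> b"
      using SV unfolding all_pairs_def by blast
    show "\<exists>x\<in>N. e = {u, x}"
    proof (cases "a = u")
      case True
      then show ?thesis using ab e unfolding N_def by auto
    next
      case False
      then have "b = u" using ab e by auto
      then show ?thesis using ab e False unfolding N_def by (intro bexI[of _ a]) (auto simp: insert_commute)
    qed
  qed
  have "card N = degree S u" unfolding degree_def using bij_betw_same_card[OF bij] .
  moreover have "card (V - {u}) = card (nbr_c V S u) + card N"
    unfolding part(1) by (rule card_Un_disjoint) (use fV part(2) in \<open>auto simp: N_def nbr_c_def\<close>)
  moreover have "card (V - {u}) = card V - 1" using u fV by simp
  ultimately show ?thesis by simp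
qed

lemma Bu_image:
  assumes "u \<in> {1..n}"
  shows "{h \<in> Kn_edges n. u \<in> h} = (\<lambda>v. {u, v}) ` ({1..n} - {u})"
    and "inj_on (\<lambda>v. {u, v}) ({1..n} - {u})"
proof -
  show "inj_on (\<lambda>v. {u, v}) ({1..n} - {u})" by (auto simp: inj_on_def doubleton_eq_iff)
  show "{h \<in> Kn_edges n. u \<in> h} = (\<lambda>v. {u, v}) ` ({1..n} - {u})"
  proof
    show "(\<lambda>v. {u, v}) ` ({1..n} - {u}) \<subseteq> {h \<in> Kn_edges n. u \<in> h}"
      using assms unfolding Kn_edges_def by (auto simp: all_pairs_mem)
    show "{h \<in> Kn_edges n. u \<in> h} \<subseteq> (\<lambda>v. {u, v}) ` ({1..n} - {u})"
    proof
      fix h assume h: "h \<in> {h \<in> Kn_edges n. u \<in> h}"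
      then obtain a b where ab: "h = {a, b}" "a \<in> {1..n}" "b \<in> {1..n}" "a \<noteq> b"
        unfolding Kn_edges_def all_pairs_def by blast
      show "h \<in> (\<lambda>v. {u, v}) ` ({1..n} - {u})"
      proof (cases "a = u")
        case True
        then show ?thesis using ab by auto
      next
        case False
        then have "b = u" using ab h by auto
        then show ?thesis using ab False by (auto simp: insert_commute)
      qed
    qed
  qed
qed

lemma card_Kn: "card (Kn_edges n) \<le> n * n"
proof -
  have "Kn_edges n \<subseteq> (\<lambda>(a, b). {a, b}) ` ({1..n} \<times> {1..n})"
    unfolding Kn_edges_def all_pairs_def by auto
  then have "card (Kn_edges n) \<le> card ((\<lambda>(a, b). {a, b}) ` ({1..n} \<times> {1..n}))"
    by (intro card_mono) auto
  also have "\<dots> \<le> card ({1..n} \<times> {1..n})" by (rule card_image_le) auto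
  finally show ?thesis by (simp add: card_cartesian_product)
qed

lemma two_choose: "2 * real (n choose 2) = real n * (real n - 1)"
proof -
  have e: "even (n * (n - 1))" by (cases "even n") auto
  have "2 * (n choose 2) = n * (n - 1)" unfolding choose_two using e by simp
  then have "real (2 * (n choose 2)) = real (n * (n - 1))" by simp
  then show ?thesis by (cases n) (auto simp: algebra_simps)
qed


lemma main_bound:
  fixes n :: nat and p :: "nat set \<Rightarrow> real" and \<gamma> :: real
  assumes n3: "n \<ge> 3" and g: "0 < \<gamma>" "\<gamma> < 1/2"
    and p01: "\<forall>h\<in>Kn_edges n. 0 \<le> p h \<and> p h \<le> 1"
    and hup: "alpha_up n p \<le> max (1/2) (1 - sqrt (alpha_e n p / 2)) - 1 / real n powr \<gamma>"
    and tail: "ln (real n + 1) + (ln (real n))^2 \<le> real n powr (1 - 2*\<gamma>) / 4096"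
  shows "graph_prob n p (\<lambda>G. N_ext {1..n} G \<le> enat (3 * t_odd {1..n} G))
       \<ge> 1 - exp (- 1 * (ln (real n))\<^sup>2) - graph_prob n p (\<lambda>G. \<not> connected_graph {1..n} G)"
proof -
  define V where "V = {1..n}"
  define K where "K = Kn_edges n"
  have KV: "K = all_pairs V" unfolding K_def V_def Kn_edges_def by simp
  have fV: "finite V" and cV: "card V = n" unfolding V_def by auto
  have fK: "finite K" unfolding K_def by (rule finite_Kn)
  define s where "s = (real n - 1) / (2 * real n powr \<gamma>)"
  have npos: "real n powr \<gamma> > 0" using n3 by simp
  have ng: "real n powr \<gamma> \<le> real n"
  proof -
    have "real n powr \<gamma> \<le> real n powr 1" using n3 g by (intro powr_mono) auto
    then show ?thesis using n3 by simp
  qed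
  have ng1: "real n powr \<gamma> \<ge> 1" using n3 g by (simp add: ge_one_powr_ge_zero)
  have s0: "s > 0" unfolding s_def using n3 npos by simp
  have s14: "s \<ge> 1/4"
  proof -
    have "(real n - 1) / (2 * real n) \<le> s" unfolding s_def using n3 npos ng
      by (intro divide_left_mono) auto
    moreover have "(real n - 1) / (2 * real n) \<ge> 1/4" using n3 by (simp add: field_simps)
    ultimately show ?thesis by linarith
  qed
  have sle: "s \<le> (real n - 1) / 2" unfolding s_def using n3 ng1
    by (intro divide_left_mono) auto
  have ns: "(real n - 1) * (1 / real n powr \<gamma>) = 2 * s" unfolding s_def using npos by (simp add: field_simps)
  define B where "B u = {h \<in> K. u \<in> h}" for u
  define M where "M = max (1/2) (1 - sqrt (alpha_e n p / 2))"
  define r where "r = sqrt (alpha_e n p / 2)"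
  define \<mu>E where "\<mu>E = (\<Sum>h\<in>K. p h)"
  have rn1: "real (n - 1) = real n - 1" using n3 by simp
  have Bcard: "card (B u) = n - 1" and Bsum: "(\<Sum>h\<in>B u. p h) = (\<Sum>v\<in>V - {u}. p {u, v})"
    if u: "u \<in> V" for u
  proof -
    have im: "B u = (\<lambda>v. {u, v}) ` (V - {u})" and inj: "inj_on (\<lambda>v. {u, v}) (V - {u})"
      using Bu_image[of u n] u unfolding B_def K_def V_def by auto
    show "card (B u) = n - 1" unfolding im using card_image[OF inj] u fV cV by simp
    show "(\<Sum>h\<in>B u. p h) = (\<Sum>v\<in>V - {u}. p {u, v})" unfolding im
      using sum.reindex[OF inj, of p] by simp
  qed
  have BK: "B u \<subseteq> K" for u unfolding B_def by auto
  have mu_le: "(\<Sum>h\<in>B u. p h) \<le> (real n - 1) * M - 2 * s" if u: "u \<in> V" for u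
  proof -
    have "(\<Sum>v\<in>V - {u}. p {u, v}) / real (n - 1) \<in> (\<lambda>u. (\<Sum>v \<in> {1..n} - {u}. p {u, v}) / real (n - 1)) ` {1..n}"
      using u unfolding V_def by auto
    then have "(\<Sum>v\<in>V - {u}. p {u, v}) / real (n - 1) \<le> alpha_up n p"
      unfolding alpha_up_def by (intro Max_ge) auto
    then have "(\<Sum>v\<in>V - {u}. p {u, v}) / real (n - 1) \<le> M - 1 / real n powr \<gamma>"
      using hup unfolding M_def by (rule order_trans)
    then have "(\<Sum>v\<in>V - {u}. p {u, v}) \<le> (real n - 1) * (M - 1 / real n powr \<gamma>)"
      using n3 rn1 by (simp add: field_simps)
    then show ?thesis using Bsum[OF u] ns by (simp add: algebra_simps)
  qed
  define BadU where "BadU u S \<longleftrightarrow> (\<Sum>h\<in>B u. p h) + s \<le> real (card (S \<inter> B u))" for u S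
  define BadE where "BadE S \<longleftrightarrow> (\<Sum>h\<in>K. p h) + s^2/2 \<le> real (card (S \<inter> K))" for S
  define Good where "Good S \<longleftrightarrow> N_ext {1..n} S \<le> enat (3 * t_odd {1..n} S)" for S
  define Conn where "Conn S \<longleftrightarrow> connected_graph {1..n} S" for S
  have det: "Good S" if SK: "S \<subseteq> K" and cS: "Conn S" and nu: "\<not> (\<exists>u\<in>V. BadU u S)" and ne: "\<not> BadE S" for S
  proof -
    have SV: "S \<subseteq> all_pairs V" using SK KV by simp
    have cA: "real (card (nbr_c V S u)) > (real n - 1) * (1 - M) + s" if u: "u \<in> V" for u
    proof -
      have "card (nbr_c V S u) + degree S u = n - 1" using nbr_card[OF fV SV u] cV by simp
      moreover have "{e \<in> S. u \<in> e} = S \<inter> B u" unfolding B_def using SK by auto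
      ultimately have "card (nbr_c V S u) + card (S \<inter> B u) = n - 1" unfolding degree_def by simp
      then have "real (card (nbr_c V S u) + card (S \<inter> B u)) = real (n - 1)" by (simp only:)
      then have "real (card (nbr_c V S u)) = real n - 1 - real (card (S \<inter> B u))"
        using rn1 by simp
      moreover have "real (card (S \<inter> B u)) < (\<Sum>h\<in>B u. p h) + s" using nu u unfolding BadU_def by auto
      ultimately show ?thesis using mu_le[OF u] by (simp add: algebra_simps)
    qed
    have cond: "\<forall>u\<in>V. \<forall>v\<in>V. u \<noteq> v \<longrightarrow>
        (card (nbr_c V S u) + card (nbr_c V S v) > card V - 2 \<or>
         card (nbr_c V S u) * card (nbr_c V S v) > card S)"
    proof (intro ballI impI)
      fix u v assume u: "u \<in> V" and v: "v \<in> V" and uv: "u \<noteq> v"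
      have cu: "real (card (nbr_c V S u)) > (real n - 1) * (1 - M) + s" by (rule cA[OF u])
      have cv: "real (card (nbr_c V S v)) > (real n - 1) * (1 - M) + s" by (rule cA[OF v])
      show "card (nbr_c V S u) + card (nbr_c V S v) > card V - 2 \<or>
         card (nbr_c V S u) * card (nbr_c V S v) > card S"
      proof (cases "1 - r \<le> 1/2")
        case True
        then have "M = 1/2" unfolding M_def r_def by auto
        then have eqM: "(real n - 1) * (1 - M) = (real n - 1) / 2" by simp
        have cu2: "real (card (nbr_c V S u)) > (real n - 1) / 2 + s" using cu unfolding eqM .
        have cv2: "real (card (nbr_c V S v)) > (real n - 1) / 2 + s" using cv unfolding eqM .
        have "real (card (nbr_c V S u)) + real (card (nbr_c V S v)) > real n - 2"
          using cu2 cv2 s0 by argo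
        then have "card (nbr_c V S u) + card (nbr_c V S v) > n - 2" using n3 by linarith
        then show ?thesis using cV by simp
      next
        case False
        then have M: "M = 1 - r" unfolding M_def r_def by auto
        have r12: "r < 1/2" using False unfolding r_def by auto
        have \<mu>E0: "\<mu>E \<ge> 0" unfolding \<mu>E_def using p01 K_def by (intro sum_nonneg) auto
        have C: "2 * real (n choose 2) = real n * (real n - 1)" by (rule two_choose)
        have "n choose 2 > 0" using n3 by (simp add: zero_less_binomial_iff)
        then have Cpos: "real (n choose 2) > 0" by simp
        have ae: "alpha_e n p = \<mu>E / real (n choose 2)" unfolding alpha_e_def \<mu>E_def K_def by simp
        have ae0: "alpha_e n p \<ge> 0" using ae \<mu>E0 Cpos by simp
        have r2: "r^2 = alpha_e n p / 2" unfolding r_def using ae0 by simp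
        have r0: "r \<ge> 0" unfolding r_def using ae0 by simp
        have muE: "\<mu>E = real n * (real n - 1) * r^2"
          using r2 ae C Cpos by (simp add: field_simps)
        define x where "x = (real n - 1) * r + s"
        have x0: "x \<ge> 0" unfolding x_def using r0 s0 n3 by simp
        have cu': "real (card (nbr_c V S u)) > x" and cv': "real (card (nbr_c V S v)) > x"
          using cu cv M unfolding x_def by auto
        have "x * x \<le> real (card (nbr_c V S u)) * real (card (nbr_c V S v))"
          using cu' cv' x0 by (intro mult_mono) auto
        moreover have "x * x \<ge> real n * (real n - 1) * r^2 + s^2"
        proof -
          have "r \<le> 2 * s" using s14 r12 by linarith
          then have "r * r \<le> r * (2 * s)" using r0 by (intro mult_left_mono) auto
          then have "r^2 \<le> 2 * r * s" by (simp add: power2_eq_square algebra_simps)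
          then have "(real n - 1) * r^2 \<le> (real n - 1) * (2 * r * s)" using n3 by (intro mult_left_mono) auto
          then show ?thesis unfolding x_def by (simp add: algebra_simps power2_eq_square)
        qed
        moreover have "real (card S) < \<mu>E + s^2/2" using ne SK unfolding BadE_def \<mu>E_def
          by (simp add: Int_absorb2)
        moreover have "s^2/2 < s^2" using s0 by simp
        ultimately have "real (card S) < real (card (nbr_c V S u)) * real (card (nbr_c V S v))"
          using muE by argo
        then have "real (card S) < real (card (nbr_c V S u) * card (nbr_c V S v))" by simp
        then show ?thesis by (simp only: of_nat_less_iff) simp
      qed
    qed
    have "N_ext V S \<le> enat (3 * t_odd V S)"
      by (rule det_main[OF fV SV _ cond]) (use cS in \<open>simp add: Conn_def V_def\<close>)
    then show ?thesis unfolding Good_def V_def by simp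
  qed
  have "graph_prob n p (\<lambda>S. \<not> Good S)
      \<le> graph_prob n p (\<lambda>S. \<not> Conn S \<or> ((\<exists>u\<in>V. BadU u S) \<or> BadE S))"
    by (rule gp_mono[OF p01]) (use det K_def in blast)
  also have "\<dots> \<le> graph_prob n p (\<lambda>S. \<not> Conn S) + graph_prob n p (\<lambda>S. (\<exists>u\<in>V. BadU u S) \<or> BadE S)"
    by (rule gp_disj[OF p01])
  also have "graph_prob n p (\<lambda>S. (\<exists>u\<in>V. BadU u S) \<or> BadE S)
      \<le> graph_prob n p (\<lambda>S. \<exists>u\<in>V. BadU u S) + graph_prob n p BadE"
    by (rule gp_disj[OF p01])
  also have "graph_prob n p (\<lambda>S. \<exists>u\<in>V. BadU u S) \<le> (\<Sum>u\<in>V. graph_prob n p (BadU u))"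
    by (rule gp_ex[OF p01 fV])
  also have "(\<Sum>u\<in>V. graph_prob n p (BadU u)) \<le> (\<Sum>u\<in>V. exp (- (s^2) / (4 * real (n - 1))))"
  proof (rule sum_mono)
    fix u assume u: "u \<in> V"
    show "graph_prob n p (BadU u) \<le> exp (- (s^2) / (4 * real (n - 1)))"
      unfolding BadU_def
      by (rule chernoff[OF p01]) (use BK K_def Bcard[OF u] s0 sle rn1 in auto)
  qed
  also have "\<dots> = real n * exp (- (s^2) / (4 * real (n - 1)))" using cV by simp
  also have "graph_prob n p BadE \<le> exp (- ((s^2/2)^2) / (4 * (real n)^2))"
    unfolding BadE_def
  proof (rule chernoff[OF p01])
    show "K \<subseteq> Kn_edges n" using K_def by simp
    show "real (card K) \<le> (real n)^2" using card_Kn[of n] unfolding K_def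
      by (simp add: power2_eq_square) (metis of_nat_le_iff of_nat_mult)
    show "0 < s^2/2" using s0 by simp
    have "s \<le> real n" using sle by simp
    then have "s^2 \<le> (real n)^2" using s0 by (intro power_mono) auto
    then show "s^2/2 \<le> 2 * (real n)^2" using zero_le_power2[of "real n"] by argo
  qed
  finally have bad: "graph_prob n p (\<lambda>S. \<not> Good S) \<le> graph_prob n p (\<lambda>S. \<not> Conn S)
      + (real n * exp (- (s^2) / (4 * real (n - 1))) + exp (- ((s^2/2)^2) / (4 * (real n)^2)))"
    by simp
  have "real n * exp (- (s^2) / (4 * real (n - 1))) + exp (- ((s^2/2)^2) / (4 * (real n)^2))
      \<le> exp (- 1 * (ln (real n))^2)"
    unfolding s_def by (rule num_tail[OF n3 g tail])
  moreover have "graph_prob n p Good + graph_prob n p (\<lambda>S. \<not> Good S) = 1"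
    by (rule gp_compl)
  ultimately show ?thesis using bad unfolding Good_def Conn_def by simp
qed


theorem theorem1:
  fixes \<beta> \<gamma> :: real
  assumes "0 < \<beta>" "\<beta> < 1/2" "0 < \<gamma>" "\<gamma> < 1/2 - \<beta>"
  shows "\<exists>D > 0. \<exists>N. \<forall>n \<ge> N. \<forall>p :: nat set \<Rightarrow> real.
     n \<ge> 2 \<longrightarrow>
     (\<forall>h \<in> Kn_edges n. 0 \<le> p h \<and> p h \<le> 1) \<longrightarrow>
     1 / real n powr \<beta> \<le> alpha_low n p \<longrightarrow>
     alpha_low n p \<le> alpha_up n p \<longrightarrow>
     alpha_up n p \<le> max (1/2) (1 - sqrt (alpha_e n p / 2)) - 1 / real n powr \<gamma> \<longrightarrow>
     graph_prob n p (\<lambda>G. N_ext {1..n} G \<le> enat (3 * t_odd {1..n} G))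
       \<ge> 1 - exp (- D * (ln (real n))\<^sup>2)
           - graph_prob n p (\<lambda>G. \<not> connected_graph {1..n} G)"
proof -
  have g: "0 < \<gamma>" "\<gamma> < 1/2" using assms by auto
  have e: "1 - 2*\<gamma> > 0" using g by linarith
  obtain N0 where N0: "\<forall>x\<ge>N0. ln (x+1) + (ln x)^2 \<le> x powr (1 - 2*\<gamma>) / 4096"
    using tail_ev[OF e] by blast
  have main: "\<forall>n \<ge> max 3 (nat \<lceil>N0\<rceil>). \<forall>p :: nat set \<Rightarrow> real.
     n \<ge> 2 \<longrightarrow>
     (\<forall>h \<in> Kn_edges n. 0 \<le> p h \<and> p h \<le> 1) \<longrightarrow>
     1 / real n powr \<beta> \<le> alpha_low n p \<longrightarrow>
     alpha_low n p \<le> alpha_up n p \<longrightarrow>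
     alpha_up n p \<le> max (1/2) (1 - sqrt (alpha_e n p / 2)) - 1 / real n powr \<gamma> \<longrightarrow>
     graph_prob n p (\<lambda>G. N_ext {1..n} G \<le> enat (3 * t_odd {1..n} G))
       \<ge> 1 - exp (- 1 * (ln (real n))\<^sup>2)
           - graph_prob n p (\<lambda>G. \<not> connected_graph {1..n} G)"
  proof (intro allI impI)
    fix n :: nat and p :: "nat set \<Rightarrow> real"
    assume n: "max 3 (nat \<lceil>N0\<rceil>) \<le> n"
      and p01: "\<forall>h \<in> Kn_edges n. 0 \<le> p h \<and> p h \<le> 1"
      and hup: "alpha_up n p \<le> max (1/2) (1 - sqrt (alpha_e n p / 2)) - 1 / real n powr \<gamma>"
    have n3: "n \<ge> 3" using n by simp
    have "N0 \<le> real (nat \<lceil>N0\<rceil>)" by (rule real_nat_ceiling_ge)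
    also have "\<dots> \<le> real n" using n by simp
    finally have "real n \<ge> N0" .
    then have tail: "ln (real n + 1) + (ln (real n))^2 \<le> real n powr (1 - 2*\<gamma>) / 4096"
      using N0 by blast
    show "graph_prob n p (\<lambda>G. N_ext {1..n} G \<le> enat (3 * t_odd {1..n} G))
       \<ge> 1 - exp (- 1 * (ln (real n))\<^sup>2)
           - graph_prob n p (\<lambda>G. \<not> connected_graph {1..n} G)"
      by (rule main_bound[OF n3 g p01 hup tail])
  qed
  show ?thesis
    by (rule exI[of _ "1::real"], rule conjI, simp, rule exI[of _ "max 3 (nat \<lceil>N0\<rceil>)"], rule main)
qed

end
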